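(* Let $a\in\mathbb Z^3$ and $A,N\ge1$ with $|a|\sim A$. Then for either choice of sign $\pm$, $$\sup_{m\in\mathbb Z}\#\{n\in\mathbb Z^3:|n|\sim N,\ |\langle a+n\rangle\pm\langle n\rangle-m|\lesssim1\}\lesssim\min(A,N)^{-1}N^3.$$
   Context: $\langle n\rangle=(1+|n|^2)^{1/2}$. "$|x|\sim N$" means $c^{-1}N\le|x|\le cN$ for a fixed absolute constant $c$ (and $|x|\le c$ when the scale is $1$); "$\lesssim1$" inside the set means bounded by a fixed absolute constant. Implicit constants are absolute. *)

theory Defs
  imports "HOL-Analysis.Analysis"
begin

definition inorm :: "int ^ 3 \<Rightarrow> real" where
  "inorm v = sqrt (\<Sum>i\<in>UNIV. (real_of_int (v $ i))^2)"

definition jbr :: "int ^ 3 \<Rightarrow> real" where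
  "jbr v = sqrt (1 + (inorm v)^2)"

text \<open>x ~ N with absolute constant c: c^-1 N \<le> x \<le> c N, and x \<le> c when the scale is 1.\<close>
definition sim :: "real \<Rightarrow> real \<Rightarrow> real \<Rightarrow> bool" where
  "sim c x N = (if N = 1 then x \<le> c else N / c \<le> x \<and> x \<le> c * N)"

end

theory Submission
  imports Defs
begin

lemma sqrt_diff_eq:
  fixes x y :: real
  assumes "0 \<le> x" "0 < y"
  shows "sqrt x - sqrt y = (x - y) / (sqrt x + sqrt y)"
proof -
  have p: "sqrt x + sqrt y > 0" using assms by (simp add: add_nonneg_pos)
  have "(sqrt x - sqrt y) * (sqrt x + sqrt y) = x - y" using assms by (simp add: algebra_simps)
  thus ?thesis using p by (simp add: eq_divide_eq)
qed

lemma between_q: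
  fixes \<alpha> z s q1 q q2 :: real
  assumes s: "s \<in> {1,-1}" and h: "z^2 \<le> q1" "q1 \<le> q" "q \<le> q2"
  shows "min (sqrt(1+q1+2*\<alpha>*z+\<alpha>^2) + s * sqrt(1+q1)) (sqrt(1+q2+2*\<alpha>*z+\<alpha>^2) + s * sqrt(1+q2))
           \<le> sqrt(1+q+2*\<alpha>*z+\<alpha>^2) + s * sqrt(1+q)
       \<and> sqrt(1+q+2*\<alpha>*z+\<alpha>^2) + s * sqrt(1+q)
           \<le> max (sqrt(1+q1+2*\<alpha>*z+\<alpha>^2) + s * sqrt(1+q1)) (sqrt(1+q2+2*\<alpha>*z+\<alpha>^2) + s * sqrt(1+q2))"
proof -
  define K where "K = 2*\<alpha>*z+\<alpha>^2"
  have pos: "1 + t + K \<ge> 1" if "z^2 \<le> t" for t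
  proof -
    have "1 + t + K = 1 + (t - z^2) + (z+\<alpha>)^2" by (simp add: K_def power2_eq_square algebra_simps)
    thus ?thesis using that by (smt (verit) zero_le_power2)
  qed
  have zq: "z^2 \<le> q" "z^2 \<le> q2" using h by auto
  have q0: "0 \<le> q1" "0 \<le> q" "0 \<le> q2" using h zero_le_power2[of z] by linarith+
  define D where "D t = sqrt(1+t+K) + sqrt(1+t)" for t
  have Dpos: "D t > 0" if "z^2 \<le> t" for t
  proof -
    have "0 \<le> t" using that zero_le_power2[of z] by linarith
    moreover have "1 + t + K \<ge> 1" using pos[OF that] .
    ultimately show ?thesis by (simp add: D_def add_nonneg_pos)
  qed
  have Dmono: "D t1 \<le> D t2" if "t1 \<le> t2" "z^2 \<le> t1" for t1 t2
    unfolding D_def using that pos[of t1] by (intro add_mono) auto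
  have geq: "sqrt(1+t+K) - sqrt(1+t) = K / D t" if "z^2 \<le> t" for t
  proof -
    have "0 \<le> t" using that zero_le_power2[of z] by linarith
    thus ?thesis using sqrt_diff_eq[of "1+t+K" "1+t"] pos[OF that] unfolding D_def by simp
  qed
  show ?thesis
  proof (cases "s = 1")
    case True
    have a: "sqrt(1+q1+2*\<alpha>*z+\<alpha>^2) \<le> sqrt(1+q+2*\<alpha>*z+\<alpha>^2)" "sqrt(1+q+2*\<alpha>*z+\<alpha>^2) \<le> sqrt(1+q2+2*\<alpha>*z+\<alpha>^2)"
            "sqrt(1+q1) \<le> sqrt(1+q)" "sqrt(1+q) \<le> sqrt(1+q2)" using h by auto
    show ?thesis using a unfolding True min_le_iff_disj le_max_iff_disj mult_1 by linarith
  next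
    case False
    hence s1: "s = -1" using s by auto
    have e: "sqrt(1+t+2*\<alpha>*z+\<alpha>^2) + s * sqrt(1+t) = K / D t" if "z^2 \<le> t" for t
      using geq[OF that] s1 unfolding K_def by (simp add: add.assoc)
    have d1: "D q1 \<le> D q" "D q \<le> D q2" using Dmono h zq by auto
    have dp: "D q1 > 0" "D q > 0" "D q2 > 0" using Dpos h zq by auto
    show ?thesis
    proof (cases "K \<ge> 0")
      case True
      have "K / D q \<le> K / D q1" "K / D q2 \<le> K / D q"
        using True d1 dp by (auto intro: divide_left_mono)
      thus ?thesis using e h zq by auto
    next
      case False
      have "K / D q1 \<le> K / D q" "K / D q \<le> K / D q2"
        using False d1 dp by (auto intro!: divide_left_mono_neg)
      thus ?thesis using e h zq by auto
    qed
  qed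
qed

lemma slice_w:
  fixes \<alpha> z R C m s :: real
  assumes s: "s \<in> {1,-1}"
  shows "emeasure lborel {w::real\<times>real. z^2 + (norm w)^2 \<le> R^2 \<and>
            \<bar>sqrt(1+(z^2+(norm w)^2)+2*\<alpha>*z+\<alpha>^2) + s * sqrt(1+(z^2+(norm w)^2)) - m\<bar> \<le> C}
       \<le> ennreal pi * emeasure lborel {q. z^2 \<le> q \<and> q \<le> R^2 \<and> \<bar>sqrt(1+q+2*\<alpha>*z+\<alpha>^2) + s * sqrt(1+q) - m\<bar> \<le> C}"
    (is "emeasure lborel ?W \<le> _ * emeasure lborel ?S")
proof -
  have cl: "closed {q::real. \<bar>sqrt(1+q+2*\<alpha>*z+\<alpha>^2) + s * sqrt(1+q) - m\<bar> \<le> C}"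
    by (intro closed_Collect_le continuous_intros)
  have "?S = {z^2..R^2} \<inter> {q::real. \<bar>sqrt(1+q+2*\<alpha>*z+\<alpha>^2) + s * sqrt(1+q) - m\<bar> \<le> C}"
    by (simp add: set_eq_iff)
  hence cp: "compact ?S" using cl compact_Int_closed[OF compact_Icc] by simp
  have ii: "is_interval ?S"
    unfolding is_interval_1
  proof (intro ballI allI impI)
    fix a b x assume a: "a \<in> ?S" and b: "b \<in> ?S" and x: "a \<le> x \<and> x \<le> b"
    have za: "z^2 \<le> a" using a by simp
    have bt: "min (sqrt(1+a+2*\<alpha>*z+\<alpha>^2) + s * sqrt(1+a)) (sqrt(1+b+2*\<alpha>*z+\<alpha>^2) + s * sqrt(1+b))
           \<le> sqrt(1+x+2*\<alpha>*z+\<alpha>^2) + s * sqrt(1+x)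
       \<and> sqrt(1+x+2*\<alpha>*z+\<alpha>^2) + s * sqrt(1+x)
           \<le> max (sqrt(1+a+2*\<alpha>*z+\<alpha>^2) + s * sqrt(1+a)) (sqrt(1+b+2*\<alpha>*z+\<alpha>^2) + s * sqrt(1+b))"
      using between_q[OF s za, of x b \<alpha>] x by blast
    have ga: "\<bar>sqrt(1+a+2*\<alpha>*z+\<alpha>^2) + s * sqrt(1+a) - m\<bar> \<le> C" using a by simp
    have gb: "\<bar>sqrt(1+b+2*\<alpha>*z+\<alpha>^2) + s * sqrt(1+b) - m\<bar> \<le> C" "b \<le> R^2" using b by simp_all
    have "\<bar>sqrt(1+x+2*\<alpha>*z+\<alpha>^2) + s * sqrt(1+x) - m\<bar> \<le> C"
      using bt ga gb(1) unfolding min_def max_def by argo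
    thus "x \<in> ?S" using za x gb(2) by simp
  qed
  then obtain a b where ab: "?S = {a..b}"
    using cp connected_compact_interval_1 is_interval_connected_1 by blast
  have sub: "z^2 + (norm w)^2 \<in> ?S" if "w \<in> ?W" for w using that by simp
  show ?thesis
  proof (cases "a \<le> b")
    case False
    hence "?S = {}" using ab by simp
    hence e: "?W = {}" using sub by blast
    have "emeasure lborel ?W = emeasure lborel ({}::(real\<times>real) set)" using e by (rule arg_cong)
    thus ?thesis by simp
  next
    case True
    have "a \<in> ?S" using ab True by simp
    hence za: "z^2 \<le> a" by simp
    define r1 where "r1 = sqrt (a - z^2)"
    define r2 where "r2 = sqrt (b - z^2)"
    have r: "0 \<le> r1" "r1 \<le> r2" using za True by (auto simp: r1_def r2_def)
    have "?W \<subseteq> cball 0 r2 - ball 0 r1"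
    proof
      fix w assume w: "w \<in> ?W"
      hence "z^2 + (norm w)^2 \<in> {a..b}" using sub ab by blast
      hence "(norm w)^2 \<le> b - z^2" "a - z^2 \<le> (norm w)^2" by auto
      hence "norm w \<le> r2" "r1 \<le> norm w"
        unfolding r1_def r2_def by (auto intro: real_le_rsqrt real_le_lsqrt)
      thus "w \<in> cball 0 r2 - ball 0 r1" by auto
    qed
    hence "emeasure lborel ?W \<le> emeasure lborel (cball (0::real\<times>real) r2 - ball 0 r1)"
      by (intro emeasure_mono) auto
    also have "\<dots> = emeasure lborel (cball (0::real\<times>real) r2) - emeasure lborel (ball (0::real\<times>real) r1)"
      using r by (intro emeasure_Diff) (auto simp: emeasure_ball)
    also have "\<dots> = ennreal (pi * r2^2) - ennreal (pi * r1^2)"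
      using r by (simp add: emeasure_ball emeasure_cball unit_ball_vol_2 mult.commute power2_eq_square)
    also have "\<dots> = ennreal (pi * (b - a))"
      using r za True by (simp add: ennreal_minus r1_def r2_def algebra_simps)
    also have "\<dots> = ennreal pi * emeasure lborel ?S"
      using True ab by (simp add: ennreal_mult)
    finally show ?thesis .
  qed
qed

lemma sqrt_diff_lower:
  fixes a b U :: real
  assumes "0 \<le> a" "a \<le> b" "b \<le> U^2" "U > 0"
  shows "(b - a) / (2*U) \<le> sqrt b - sqrt a"
proof -
  have sb: "sqrt b \<le> U" using assms real_sqrt_le_mono[of b "U^2"] by simp
  have sa: "sqrt a \<le> U" using assms real_sqrt_le_mono[of a "U^2"] by simp
  have e: "(sqrt b - sqrt a) * (sqrt b + sqrt a) = b - a"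
    using assms by (simp add: algebra_simps)
  have "sqrt a \<le> sqrt b" using assms by simp
  hence "(sqrt b - sqrt a) * (sqrt b + sqrt a) \<le> (sqrt b - sqrt a) * (2*U)"
    using sa sb by (intro mult_left_mono) auto
  with e have "b - a \<le> (sqrt b - sqrt a) * (2*U)" by simp
  thus ?thesis using assms by (simp add: divide_le_eq mult.commute)
qed

lemma z_close:
  fixes \<alpha> R C s m q za zb :: real
  assumes al: "\<alpha> > 0" and R: "R \<ge> 0"
    and h1: "za^2 \<le> q" "q \<le> R^2" "\<bar>sqrt(1+q+2*\<alpha>*za+\<alpha>^2) + s * sqrt(1+q) - m\<bar> \<le> C"
    and h2: "zb^2 \<le> q" "\<bar>sqrt(1+q+2*\<alpha>*zb+\<alpha>^2) + s * sqrt(1+q) - m\<bar> \<le> C"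
    and le: "za \<le> zb"
  shows "zb - za \<le> 2*C*(1+R+\<alpha>)/\<alpha>"
proof -
  let ?U = "1+R+\<alpha>"
  have a1: "1 + (za+\<alpha>)^2 \<le> 1+q+2*\<alpha>*za+\<alpha>^2" using h1 by (simp add: power2_eq_square algebra_simps)
  have "\<bar>zb\<bar> \<le> R" using h2(1) h1(2) R power2_le_imp_le[of "\<bar>zb\<bar>" R] by simp
  have "\<bar>za\<bar> \<le> R" using h1 R power2_le_imp_le[of "\<bar>za\<bar>" R] by simp
  have b2: "1+q+2*\<alpha>*zb+\<alpha>^2 \<le> ?U^2"
  proof -
    have "2*\<alpha>*zb \<le> 2*(R*\<alpha>)" using \<open>\<bar>zb\<bar> \<le> R\<close> al by (simp add: abs_le_iff mult.commute)
    moreover have "0 \<le> R*\<alpha>" using R al by simp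
    moreover have "?U^2 = 1 + R^2 + \<alpha>^2 + 2*R + 2*\<alpha> + 2*(R*\<alpha>)" by (simp add: power2_eq_square algebra_simps)
    ultimately show ?thesis using h1(2) R al by linarith
  qed
  have mono: "1+q+2*\<alpha>*za+\<alpha>^2 \<le> 1+q+2*\<alpha>*zb+\<alpha>^2" using le al by (simp add: mult_left_mono)
  have "(2*\<alpha>*(zb-za)) / (2*?U) \<le> sqrt(1+q+2*\<alpha>*zb+\<alpha>^2) - sqrt(1+q+2*\<alpha>*za+\<alpha>^2)"
  proof -
    have "(1+q+2*\<alpha>*zb+\<alpha>^2) - (1+q+2*\<alpha>*za+\<alpha>^2) = 2*\<alpha>*(zb-za)" by (simp add: algebra_simps)
    moreover have "0 \<le> 1+q+2*\<alpha>*za+\<alpha>^2" using a1 by (smt (verit) zero_le_power2)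
    ultimately show ?thesis
      using sqrt_diff_lower[of "1+q+2*\<alpha>*za+\<alpha>^2" "1+q+2*\<alpha>*zb+\<alpha>^2" ?U] mono b2 R al by simp
  qed
  also have "\<dots> \<le> 2*C" using h1(3) h2(2) by linarith
  finally have f: "(2*\<alpha>*(zb-za)) / (2*?U) \<le> 2*C" .
  have "(2*\<alpha>*(zb-za)) / (2*?U) = \<alpha>*(zb-za) / ?U" unfolding mult.assoc by (rule mult_divide_mult_cancel_left) simp
  with f have "\<alpha>*(zb-za) / ?U \<le> 2*C" by simp
  hence "\<alpha>*(zb-za) \<le> 2*C*?U" using R al by (simp add: divide_le_eq)
  thus ?thesis using al by (simp add: le_divide_eq mult.commute)
qed


lemma slice_z:
  fixes \<alpha> R C m s q :: real
  assumes al: "\<alpha> > 0" and R: "R \<ge> 0" and C: "C \<ge> 0"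
  shows "emeasure lborel {z. z^2 \<le> q \<and> q \<le> R^2 \<and> \<bar>sqrt(1+q+2*\<alpha>*z+\<alpha>^2) + s * sqrt(1+q) - m\<bar> \<le> C}
     \<le> ennreal (2*(2*C*(1+R+\<alpha>)/\<alpha>)) * indicator {0..R^2} q"
    (is "emeasure lborel ?Z \<le> ennreal (2*?d) * _")
proof (cases "?Z = {}")
  case True
  have "emeasure lborel ?Z = emeasure lborel ({}::real set)" using True by (rule arg_cong)
  thus ?thesis by simp
next
  case False
  then obtain z1 where z1: "z1 \<in> ?Z" by blast
  have "z1^2 \<le> q" "q \<le> R^2" using z1 by auto
  moreover have "0 \<le> q" using \<open>z1^2 \<le> q\<close> zero_le_power2[of z1] by linarith
  ultimately have q: "q \<in> {0..R^2}" by simp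
  have "?Z \<subseteq> {z1 - ?d .. z1 + ?d}"
  proof
    fix z assume z: "z \<in> ?Z"
    have "z - z1 \<le> ?d" if "z1 \<le> z"
      using z_close[where za=z1 and zb=z and q=q and C=C and s=s and m=m] al R z1 z that by simp
    moreover have "z1 - z \<le> ?d" if "z \<le> z1"
      using z_close[where za=z and zb=z1 and q=q and C=C and s=s and m=m] al R z1 z that by simp
    ultimately show "z \<in> {z1 - ?d .. z1 + ?d}" by (cases "z1 \<le> z") auto
  qed
  hence "emeasure lborel ?Z \<le> emeasure lborel {z1 - ?d .. z1 + ?d}" by (intro emeasure_mono) auto
  also have "\<dots> = ennreal (2*?d)"
  proof -
    have "0 \<le> ?d" using C R al by simp
    hence "z1 - ?d \<le> z1 + ?d" by linarith
    thus ?thesis by (simp add: emeasure_lborel_Icc)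
  qed
  finally show ?thesis using q by simp
qed

lemma vol_T:
  fixes \<alpha> R C m s :: real
  assumes al: "\<alpha> > 0" and R: "R \<ge> 0" and s: "s \<in> {1,-1}" and C: "C \<ge> 0"
  shows "emeasure lborel {x::real\<times>(real\<times>real). (fst x)^2 + (norm (snd x))^2 \<le> R^2 \<and>
            \<bar>sqrt(1+((fst x)^2+(norm (snd x))^2)+2*\<alpha>*(fst x)+\<alpha>^2) + s * sqrt(1+((fst x)^2+(norm (snd x))^2)) - m\<bar> \<le> C}
       \<le> ennreal (pi * (2*(2*C*(1+R+\<alpha>)/\<alpha>)) * R^2)"
    (is "emeasure lborel ?T \<le> ennreal (pi * ?D * R^2)")
proof -
  define S where "S = {x::real\<times>real. (fst x)^2 \<le> snd x \<and> snd x \<le> R^2 \<and>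
     \<bar>sqrt(1+snd x+2*\<alpha>*fst x+\<alpha>^2) + s * sqrt(1+snd x) - m\<bar> \<le> C}"
  have Tm: "?T \<in> sets (lborel \<Otimes>\<^sub>M lborel)"
    unfolding lborel_prod sets_lborel by (intro borel_closed closed_Collect_conj closed_Collect_le continuous_intros)
  have Sm: "S \<in> sets (lborel \<Otimes>\<^sub>M lborel)"
    unfolding lborel_prod sets_lborel S_def by (intro borel_closed closed_Collect_conj closed_Collect_le continuous_intros)
  have "emeasure lborel ?T = emeasure (lborel \<Otimes>\<^sub>M lborel) ?T" by (simp add: lborel_prod)
  also have "\<dots> = (\<integral>\<^sup>+z. emeasure lborel (Pair z -` ?T) \<partial>lborel)"
    by (rule lborel.emeasure_pair_measure_alt[OF Tm])
  also have "\<dots> \<le> (\<integral>\<^sup>+z. ennreal pi * emeasure lborel (Pair z -` S) \<partial>lborel)"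
  proof (rule nn_integral_mono)
    fix z :: real
    have "Pair z -` ?T = {w::real\<times>real. z^2 + (norm w)^2 \<le> R^2 \<and>
            \<bar>sqrt(1+(z^2+(norm w)^2)+2*\<alpha>*z+\<alpha>^2) + s * sqrt(1+(z^2+(norm w)^2)) - m\<bar> \<le> C}" by simp
    moreover have "Pair z -` S = {q. z^2 \<le> q \<and> q \<le> R^2 \<and> \<bar>sqrt(1+q+2*\<alpha>*z+\<alpha>^2) + s * sqrt(1+q) - m\<bar> \<le> C}"
      by (simp add: S_def)
    ultimately show "emeasure lborel (Pair z -` ?T) \<le> ennreal pi * emeasure lborel (Pair z -` S)"
      using slice_w[OF s, of z R \<alpha> m C] by simp
  qed
  also have "\<dots> = ennreal pi * (\<integral>\<^sup>+z. emeasure lborel (Pair z -` S) \<partial>lborel)"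
    by (rule nn_integral_cmult) (rule lborel.measurable_emeasure_Pair[OF Sm])
  finally have st1: "emeasure lborel ?T \<le> ennreal pi * (\<integral>\<^sup>+z. emeasure lborel (Pair z -` S) \<partial>lborel)" .
  have "(\<integral>\<^sup>+z. emeasure lborel (Pair z -` S) \<partial>lborel) = emeasure (lborel \<Otimes>\<^sub>M lborel) S"
    by (rule lborel.emeasure_pair_measure_alt[OF Sm, symmetric])
  also have "\<dots> = (\<integral>\<^sup>+q. emeasure lborel ((\<lambda>z. (z, q)) -` S) \<partial>lborel)"
    by (rule lborel_pair.emeasure_pair_measure_alt2[OF Sm])
  also have "\<dots> \<le> (\<integral>\<^sup>+q. ennreal ?D * indicator {0..R^2} q \<partial>lborel)"
  proof (rule nn_integral_mono)
    fix q :: real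
    have "(\<lambda>z. (z, q)) -` S = {z. z^2 \<le> q \<and> q \<le> R^2 \<and> \<bar>sqrt(1+q+2*\<alpha>*z+\<alpha>^2) + s * sqrt(1+q) - m\<bar> \<le> C}"
      by (simp add: S_def)
    thus "emeasure lborel ((\<lambda>z. (z, q)) -` S) \<le> ennreal ?D * indicator {0..R^2} q"
      using slice_z[where q=q and C=C and s=s and m=m, OF al R C] by simp
  qed
  also have "\<dots> = ennreal ?D * ennreal (R^2)"
    by (subst nn_integral_cmult_indicator) auto
  finally have st2: "(\<integral>\<^sup>+z. emeasure lborel (Pair z -` S) \<partial>lborel) \<le> ennreal ?D * ennreal (R^2)" .
  have "emeasure lborel ?T \<le> ennreal pi * (ennreal ?D * ennreal (R^2))"
    using st1 st2 by (meson mult_left_mono order_trans zero_le)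
  also have "ennreal pi * (ennreal ?D * ennreal (R^2)) = ennreal (pi * ?D * R^2)"
  proof -
    have Dn: "0 \<le> ?D" using C R al by simp
    have "ennreal (pi * ?D * R^2) = ennreal pi * ennreal (?D * R^2)"
      unfolding mult.assoc[of pi] by (rule ennreal_mult[OF pi_ge_zero mult_nonneg_nonneg[OF Dn zero_le_power2]])
    also have "\<dots> = ennreal pi * (ennreal ?D * ennreal (R^2))"
      using ennreal_mult[OF Dn zero_le_power2[of R]] by simp
    finally show ?thesis by simp
  qed
  finally show ?thesis .
qed

definition L3 :: "real^3 \<Rightarrow> real \<times> (real \<times> real)" where
  "L3 y = (y$1, (y$2, y$3))"

lemma L3_meas: "L3 \<in> measurable lborel borel"
proof -
  have "continuous_on UNIV L3" unfolding L3_def by (intro continuous_intros)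
  hence "L3 \<in> borel_measurable borel" by (rule borel_measurable_continuous_onI)
  thus ?thesis by (simp add: measurable_lborel1)
qed

lemma prod_Basis_cart3: "(\<Prod>b\<in>(Basis::(real^3) set). f b) = f (axis 1 1) * f (axis 2 1) * f (axis 3 1)"
proof -
  have "(\<Prod>b\<in>(Basis::(real^3) set). f b) = (\<Prod>i\<in>UNIV. f (axis i 1))"
    by (simp add: Basis_vec_def axis_eq_axis prod.UNION_disjoint)
  also have "\<dots> = f (axis 1 1) * f (axis 2 1) * f (axis 3 1)"
    unfolding UNIV_3 by (simp add: ac_simps)
  finally show ?thesis .
qed

lemma L3_lborel: "distr lborel borel L3 = lborel"
proof -
  have "lborel = distr lborel borel L3"
  proof (rule lborel_eqI)
    fix l u :: "real \<times> (real \<times> real)"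
    assume lu: "\<And>b. b \<in> Basis \<Longrightarrow> l \<bullet> b \<le> u \<bullet> b"
    obtain l1 l2 l3 where l: "l = (l1,(l2,l3))" by (metis prod.exhaust)
    obtain u1 u2 u3 where u: "u = (u1,(u2,u3))" by (metis prod.exhaust)
    have le: "l1 \<le> u1" "l2 \<le> u2" "l3 \<le> u3"
      using lu[of "(1,0)"] lu[of "(0,(1,0))"] lu[of "(0,(0,1))"] by (auto simp: l u Basis_prod_def)
    let ?l = "vector [l1,l2,l3] :: real^3"
    let ?u = "vector [u1,u2,u3] :: real^3"
    have pre: "L3 -` box l u \<inter> space lborel = box ?l ?u"
      by (auto simp: L3_def l u mem_box_cart forall_3 Basis_prod_def mem_box inner_prod_def)
    have "emeasure (distr lborel borel L3) (box l u) = emeasure lborel (box ?l ?u)"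
    proof -
      have pre': "L3 -` box l u = box ?l ?u" using pre by simp
      show ?thesis by (subst emeasure_distr[OF L3_meas]) (simp_all add: pre')
    qed
    also have "\<dots> = ennreal ((u1-l1)*(u2-l2)*(u3-l3))"
    proof -
      have "\<forall>i. ?l$i \<le> ?u$i" unfolding forall_3 using le by simp
      hence cond: "\<forall>b\<in>(Basis::(real^3) set). ?l\<bullet>b \<le> ?u\<bullet>b"
        by (auto simp: Basis_vec_def inner_axis)
      have "emeasure lborel (box ?l ?u) = ennreal (\<Prod>b\<in>Basis. (?u - ?l) \<bullet> b)"
        using cond by (simp add: emeasure_lborel_box_eq)
      also have "(\<Prod>b\<in>Basis. (?u - ?l) \<bullet> b) = (u1-l1)*(u2-l2)*(u3-l3)"
        unfolding prod_Basis_cart3 by (simp add: inner_axis)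
      finally show ?thesis .
    qed
    also have "\<dots> = (\<Prod>b\<in>Basis. (u - l) \<bullet> b)"
      by (simp add: l u Basis_prod_def prod.union_disjoint prod.reindex mult_ac)
    finally show "emeasure (distr lborel borel L3) (box l u) = (\<Prod>b\<in>Basis. (u - l) \<bullet> b)" .
  qed simp
  thus ?thesis by simp
qed

definition rv :: "int^3 \<Rightarrow> real^3" where "rv v = (\<chi> i. real_of_int (v$i))"

lemma inorm_rv: "inorm v = norm (rv v)"
  by (simp add: inorm_def norm_vec_def L2_set_def rv_def)

lemma jbr_rv: "jbr v = sqrt (1 + (norm (rv v))^2)"
  by (simp add: jbr_def inorm_rv)

lemma rv_add: "rv (a + n) = rv a + rv n"
  by (simp add: rv_def vec_eq_iff)

lemma rv_eq_iff: "rv a = rv b \<longleftrightarrow> a = b"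
  by (simp add: rv_def vec_eq_iff)

lemma rv_dist: assumes "n \<noteq> n'" shows "1 \<le> norm (rv n - rv n')"
proof -
  obtain i where i: "n$i \<noteq> n'$i" using assms by (auto simp: vec_eq_iff)
  hence "1 \<le> \<bar>n$i - n'$i\<bar>" by simp
  hence "1 \<le> \<bar>(rv n - rv n')$i\<bar>" by (simp add: rv_def)
  thus ?thesis using component_le_norm_cart[of "rv n - rv n'" i] by linarith
qed

lemma jlip: "\<bar>sqrt (1 + (norm p)^2) - sqrt (1 + (norm q)^2)\<bar> \<le> norm (p - q)"
  for p q :: "real^3"
proof -
  have "sqrt (1 + (norm p)^2) = norm ((1::real), p)" by (simp add: norm_Pair)
  moreover have "sqrt (1 + (norm q)^2) = norm ((1::real), q)" by (simp add: norm_Pair)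
  moreover have "norm ((1::real), p) - norm ((1::real), q) \<le> norm (((1::real), p) - (1, q))"
    using norm_triangle_ineq2 by blast
  moreover have "norm ((1::real), q) - norm ((1::real), p) \<le> norm (((1::real), q) - (1, p))"
    using norm_triangle_ineq2 by blast
  moreover have "norm (((1::real), p) - (1, q)) = norm (p - q)" by (simp add: norm_Pair)
  moreover have "norm (((1::real), q) - (1, p)) = norm (p - q)" by (simp add: norm_Pair norm_minus_commute)
  ultimately show ?thesis by linarith
qed

lemma norm_sq3: "(norm (y::real^3))^2 = (y$1)^2 + ((y$2)^2 + (y$3)^2)"
  by (simp add: norm_vec_def L2_set_def sum_3 add.assoc)

lemma norm_snd_L3: "(norm (snd (L3 y)))^2 = (y$2)^2 + (y$3)^2"
  by (simp add: L3_def norm_Pair)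

lemma count_main:
  fixes a :: "int^3" and s m C R0 :: real and P :: "(int^3) set"
  assumes a: "a \<noteq> 0" and s: "s \<in> {1,-1}" and C: "C \<ge> 0" and R0: "R0 \<ge> 0" and fin: "finite P"
    and P: "\<And>n. n \<in> P \<Longrightarrow> norm (rv n) \<le> R0 \<and>
               \<bar>sqrt (1 + (norm (rv a + rv n))^2) + s * sqrt (1 + (norm (rv n))^2) - m\<bar> \<le> C"
  shows "real (card P) * (pi/6) \<le> pi * (2*(2*(C+1)*(1+(R0+1)+norm (rv a))/norm (rv a))) * (R0+1)^2"
proof -
  define \<alpha> where "\<alpha> = norm (rv a)"
  define R where "R = R0 + 1"
  have al: "\<alpha> > 0" using a rv_eq_iff[of a 0] unfolding \<alpha>_def by (auto simp: rv_def vec_eq_iff)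
  have R: "R \<ge> 0" using R0 by (simp add: R_def)
  define e :: "real^3" where "e = \<alpha> *\<^sub>R axis 1 1"
  have ne: "norm (rv a) = norm e" using al by (simp add: e_def \<alpha>_def)
  obtain g where g: "orthogonal_transformation g" "g (rv a) = e"
    using orthogonal_transformation_exists[OF ne] by blast
  have lin: "linear g" and gn: "\<And>v. norm (g v) = norm v" using g(1) by (auto simp: orthogonal_transformation)
  define T where "T = {x::real\<times>(real\<times>real). (fst x)^2 + (norm (snd x))^2 \<le> R^2 \<and>
            \<bar>sqrt(1+((fst x)^2+(norm (snd x))^2)+2*\<alpha>*(fst x)+\<alpha>^2) + s * sqrt(1+((fst x)^2+(norm (snd x))^2)) - m\<bar> \<le> C+1}"
  have Tb: "T \<in> sets borel"
    unfolding T_def by (intro borel_closed closed_Collect_conj closed_Collect_le continuous_intros)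
  define B where "B = (\<Union>n\<in>P. ball (rv n) (1/2))"
  have sub: "g ` B \<subseteq> L3 -` T"
  proof
    fix y assume "y \<in> g ` B"
    then obtain x n where n: "n \<in> P" and x: "x \<in> ball (rv n) (1/2)" and y: "y = g x"
      unfolding B_def by blast
    have dx: "norm (x - rv n) < 1/2" using x by (simp add: dist_norm norm_minus_commute)
    have Pn: "norm (rv n) \<le> R0" "\<bar>sqrt (1 + (norm (rv a + rv n))^2) + s * sqrt (1 + (norm (rv n))^2) - m\<bar> \<le> C"
      using P[OF n] by auto
    have nx: "norm x \<le> R"
      using norm_triangle_ineq2[of x "rv n"] dx Pn(1) unfolding R_def by linarith
    have ny: "norm y = norm x" using y gn by simp
    have gy: "g (x + rv a) = y + e" using y g(2) linear_add[OF lin] by simp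
    have nye: "norm (y + e) = norm (x + rv a)" using gy gn by metis
    have c1: "(y$1)^2 + (norm (snd (L3 y)))^2 = (norm y)^2" by (simp add: norm_snd_L3 norm_sq3)
    have c2: "1 + ((y$1)^2 + (norm (snd (L3 y)))^2) + 2*\<alpha>*(y$1) + \<alpha>^2 = 1 + (norm (y + e))^2"
    proof -
      have e1: "(y+e)$1 = y$1 + \<alpha>" "(y+e)$2 = y$2" "(y+e)$3 = y$3" by (simp_all add: e_def axis_def)
      have "(norm (y+e))^2 = (y$1+\<alpha>)^2 + ((y$2)^2 + (y$3)^2)" using norm_sq3[of "y+e"] e1 by simp
      thus ?thesis using norm_snd_L3[of y] by (simp add: power2_eq_square algebra_simps)
    qed
    have l1: "\<bar>sqrt (1 + (norm (x + rv a))^2) - sqrt (1 + (norm (rv a + rv n))^2)\<bar> \<le> 1/2"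
      using jlip[of "x + rv a" "rv a + rv n"] dx by (simp add: algebra_simps)
    have l2: "\<bar>sqrt (1 + (norm x)^2) - sqrt (1 + (norm (rv n))^2)\<bar> \<le> 1/2"
      using jlip[of x "rv n"] dx by simp
    have l2': "\<bar>s * sqrt (1 + (norm x)^2) - s * sqrt (1 + (norm (rv n))^2)\<bar> \<le> 1/2"
      using l2 s by (auto simp: abs_minus_commute)
    have val: "\<bar>sqrt (1 + (norm (x + rv a))^2) + s * sqrt (1 + (norm x)^2) - m\<bar> \<le> C + 1"
      using l1 l2' Pn(2) by linarith
    have "(y$1)^2 + (norm (snd (L3 y)))^2 \<le> R^2"
      using c1 ny nx R norm_ge_zero[of x] by (simp add: power_mono)
    moreover have "\<bar>sqrt(1+((y$1)^2+(norm (snd (L3 y)))^2)+2*\<alpha>*(y$1)+\<alpha>^2) + s * sqrt(1+((y$1)^2+(norm (snd (L3 y)))^2)) - m\<bar> \<le> C+1"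
    proof -
      have q1: "1 + ((y$1)^2 + (norm (snd (L3 y)))^2) + 2*\<alpha>*(y$1) + \<alpha>^2 = 1 + (norm (x + rv a))^2"
        using c2 nye by simp
      have q2: "(y$1)^2 + (norm (snd (L3 y)))^2 = (norm x)^2" using c1 ny by simp
      show ?thesis unfolding q1 unfolding q2 using val .
    qed
    ultimately show "y \<in> L3 -` T" by (simp add: T_def L3_def)
  qed
  have Bm: "B \<in> lmeasurable"
    unfolding B_def using fin by (intro lmeasurable_open) auto
  have disj: "disjoint_family_on (\<lambda>n. ball (rv n) (1/2)) P"
    unfolding disjoint_family_on_def
  proof (intro ballI impI)
    fix n n' assume "n \<in> P" "n' \<in> P" "n \<noteq> n'"
    hence d: "1 \<le> norm (rv n - rv n')" using rv_dist by blast
    show "ball (rv n) (1/2) \<inter> ball (rv n') (1/2) = {}"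
    proof (rule ccontr)
      assume "ball (rv n) (1/2) \<inter> ball (rv n') (1/2) \<noteq> {}"
      then obtain x where "dist (rv n) x < 1/2" "dist (rv n') x < 1/2" by auto
      hence "dist (rv n) (rv n') < 1" using dist_triangle[of "rv n" "rv n'" x] dist_commute[of x "rv n'"] by linarith
      thus False using d by (simp add: dist_norm)
    qed
  qed
  have ballm: "measure lebesgue (ball (c::real^3) (1/2)) = pi/6" for c
  proof -
    have "measure lebesgue (ball c (1/2)) = measure lborel (ball c (1/2))" by simp
    also have "\<dots> = pi/6" by (simp add: content_ball unit_ball_vol_3 power3_eq_cube)
    finally show ?thesis .
  qed
  have "measure lebesgue B = (\<Sum>n\<in>P. measure lebesgue (ball (rv n) (1/2)))"
    unfolding B_def using fin disj
    by (intro measure_finite_Union) (auto simp: fmeasurable_def emeasure_ball)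
  also have "\<dots> = real (card P) * (pi/6)" by (simp add: ballm)
  finally have mB: "measure lebesgue B = real (card P) * (pi/6)" .
  have "measure lebesgue (g ` B) = measure lebesgue B"
    by (rule measure_orthogonal_image[OF g(1) Bm])
  moreover have "emeasure lebesgue (g ` B) \<le> ennreal (pi * (2*(2*(C+1)*(1+R+\<alpha>)/\<alpha>)) * R^2)"
  proof -
    have L3T: "L3 -` T \<in> sets lborel"
      using measurable_sets[OF L3_meas Tb] by simp
    have "emeasure lebesgue (g ` B) \<le> emeasure lebesgue (L3 -` T)"
      using sub L3T by (intro emeasure_mono) auto
    also have "\<dots> = emeasure lborel (L3 -` T)" using L3T by simp
    also have "\<dots> = emeasure (distr lborel borel L3) T"
      using Tb by (subst emeasure_distr[OF L3_meas]) auto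
    also have "\<dots> = emeasure lborel T" by (simp add: L3_lborel)
    also have "\<dots> \<le> ennreal (pi * (2*(2*(C+1)*(1+R+\<alpha>)/\<alpha>)) * R^2)"
      unfolding T_def by (rule vol_T[OF al R s]) (use C in simp)
    finally show ?thesis .
  qed
  hence "measure lebesgue (g ` B) \<le> pi * (2*(2*(C+1)*(1+R+\<alpha>)/\<alpha>)) * R^2"
    unfolding measure_def using C al R by (intro enn2real_leI) auto
  ultimately show ?thesis using mB unfolding R_def \<alpha>_def by simp
qed

lemma arith_final:
  fixes k \<alpha> c N \<mu> C' :: real
  assumes c: "c \<ge> 1" and N: "N \<ge> 1" and al: "\<alpha> > 0" and mu: "0 < \<mu>" "\<mu> \<le> N"
    and inv: "1/\<alpha> \<le> c/\<mu>" and C': "C' \<ge> 0"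
    and h: "k * (pi/6) \<le> pi * (2*(2*(C'+1)*(1+(c*N+1)+\<alpha>)/\<alpha>)) * (c*N+1)^2"
  shows "k \<le> 96*(C'+1)*c^2*(3*c^2+1) * N^3 / \<mu>"
proof -
  have cN: "1 \<le> c*N" using mult_mono[of 1 c 1 N] c N by simp
  have eq: "pi * (2*(2*(C'+1)*(1+(c*N+1)+\<alpha>)/\<alpha>)) * (c*N+1)^2
      = (24*(C'+1) * ((2+c*N+\<alpha>)/\<alpha>) * (c*N+1)^2) * (pi/6)"
    by (simp add: algebra_simps add_divide_distrib)
  have "k \<le> 24*(C'+1) * ((2+c*N+\<alpha>)/\<alpha>) * (c*N+1)^2"
    using h unfolding eq by (rule mult_right_le_imp_le) simp
  also have "(2+c*N+\<alpha>)/\<alpha> \<le> (3*c^2+1)*N/\<mu>"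
  proof -
    have e: "(2+c*N+\<alpha>)/\<alpha> = (2+c*N)*(1/\<alpha>) + 1" using al by (simp add: field_simps)
    have "2 + c*N \<le> 3*c*N" using cN by linarith
    hence "(2+c*N)*(1/\<alpha>) \<le> (3*c*N)*(c/\<mu>)"
      using inv al c N by (intro mult_mono) auto
    moreover have "1 \<le> N/\<mu>" using mu by simp
    ultimately have "(2+c*N)*(1/\<alpha>) + 1 \<le> (3*c*N)*(c/\<mu>) + N/\<mu>" by linarith
    also have "\<dots> = (3*c^2+1)*N/\<mu>" by (simp add: field_simps power2_eq_square add_divide_distrib)
    finally show ?thesis using e by simp
  qed
  hence "24*(C'+1) * ((2+c*N+\<alpha>)/\<alpha>) * (c*N+1)^2 \<le> 24*(C'+1) * ((3*c^2+1)*N/\<mu>) * (c*N+1)^2"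
    using C' by (intro mult_right_mono mult_left_mono) auto
  also have "(c*N+1)^2 \<le> (2*c*N)^2"
    using cN by (intro power_mono) (simp_all add: mult.commute)
  hence "24*(C'+1) * ((3*c^2+1)*N/\<mu>) * (c*N+1)^2 \<le> 24*(C'+1) * ((3*c^2+1)*N/\<mu>) * (2*c*N)^2"
    using C' mu N c by (intro mult_left_mono) auto
  also have "24*(C'+1) * ((3*c^2+1)*N/\<mu>) * (2*c*N)^2 = 96*(C'+1)*c^2*(3*c^2+1) * N^3 / \<mu>"
    by (simp add: field_simps power2_eq_square power3_eq_cube)
  finally show ?thesis .
qed

theorem lemma4p15:
  fixes c C :: real
  assumes "c \<ge> 1" and "C > 0"
  shows "\<exists>K::real. \<forall>(a::int^3) (A::real) (N::real) (s::real) (m::int).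
           A \<ge> 1 \<longrightarrow> N \<ge> 1 \<longrightarrow> sim c (inorm a) A \<longrightarrow> s \<in> {1, -1} \<longrightarrow>
           real (card {n::int^3. sim c (inorm n) N \<and>
                         \<bar>jbr (a + n) + s * jbr n - real_of_int m\<bar> \<le> C})
             \<le> K * N ^ 3 / min A N"
proof (intro exI[of _ "96*((C+1)+1)*c^2*(3*c^2+1)"] allI impI)
  fix a :: "int^3" and A N s :: real and m :: int
  assume A: "A \<ge> 1" and N: "N \<ge> 1" and sa: "sim c (inorm a) A" and s: "s \<in> {1,-1}"
  have c: "c \<ge> 1" and C: "C > 0" using assms by auto
  define S where "S = {n::int^3. sim c (inorm n) N \<and> \<bar>jbr (a + n) + s * jbr n - real_of_int m\<bar> \<le> C}"
  define \<mu> where "\<mu> = min A N"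
  have mu: "0 < \<mu>" "\<mu> \<le> N" "\<mu> \<le> A" using A N by (auto simp: \<mu>_def)
  have Kpos: "0 \<le> 96*((C+1)+1)*c^2*(3*c^2+1) * N^3 / \<mu>" using C mu N by simp
  show "real (card S) \<le> 96*((C+1)+1)*c^2*(3*c^2+1) * N ^ 3 / min A N"
  proof (cases "finite S")
    case False
    thus ?thesis using Kpos by (simp add: \<mu>_def)
  next
    case True
    define e1 :: "int^3" where "e1 = axis 1 1"
    define a' where "a' = (if a = 0 then e1 else a)"
    have a'0: "a' \<noteq> 0" by (simp add: a'_def e1_def axis_eq_0_iff)
    have simle: "x \<le> c * N" if "sim c x N" for x using that by (auto simp: sim_def split: if_splits)
    have Pc: "norm (rv n) \<le> c*N \<and>
               \<bar>sqrt (1 + (norm (rv a' + rv n))^2) + s * sqrt (1 + (norm (rv n))^2) - real_of_int m\<bar> \<le> C+1"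
      if n: "n \<in> S" for n
    proof -
      have n1: "norm (rv n) \<le> c*N" using n simle by (simp add: S_def inorm_rv)
      have n2: "\<bar>sqrt (1 + (norm (rv a + rv n))^2) + s * sqrt (1 + (norm (rv n))^2) - real_of_int m\<bar> \<le> C"
        using n by (simp add: S_def jbr_rv rv_add)
      have "\<bar>sqrt (1 + (norm (rv a' + rv n))^2) - sqrt (1 + (norm (rv a + rv n))^2)\<bar> \<le> 1"
      proof (cases "a = 0")
        case True
        have "rv a = 0" using True by (simp add: rv_def vec_eq_iff)
        moreover have "norm (rv e1) = 1" by (simp add: rv_def e1_def axis_def norm_vec_def L2_set_def sum_3)
        ultimately show ?thesis using jlip[of "rv e1 + rv n" "rv n"] True by (simp add: a'_def)
      next
        case False
        thus ?thesis by (simp add: a'_def)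
      qed
      thus ?thesis using n1 n2 by linarith
    qed
    have rv0: "rv 0 = 0" by (simp add: rv_def vec_eq_iff)
    have "1 \<le> norm (rv a')" using rv_dist[OF a'0] by (simp add: rv0)
    hence npos: "0 < norm (rv a')" by linarith
    have inv: "1 / norm (rv a') \<le> c / \<mu>"
    proof -
      have ge1: "1 \<le> norm (rv a')" using rv_dist[OF a'0] by (simp add: rv0)
      show ?thesis
      proof (cases "A = 1")
        case True
        hence "\<mu> = 1" using N by (simp add: \<mu>_def)
        have "1 / norm (rv a') \<le> 1 / 1" using ge1 by (intro divide_left_mono) auto
        thus ?thesis using c \<open>\<mu> = 1\<close> by simp
      next
        case False
        hence "A / c \<le> inorm a" using sa by (simp add: sim_def)
        moreover have "0 < A / c" using A c by simp
        ultimately have "a \<noteq> 0" by (auto simp: inorm_def)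
        hence "A / c \<le> norm (rv a')" using \<open>A / c \<le> inorm a\<close> by (simp add: a'_def inorm_rv)
        hence "1 / norm (rv a') \<le> 1 / (A / c)" using A c npos by (intro divide_left_mono) auto
        also have "\<dots> = c / A" by simp
        also have "\<dots> \<le> c / \<mu>" using mu c by (intro divide_left_mono) auto
        finally show ?thesis .
      qed
    qed
    have cN0: "0 \<le> c*N" using c N by simp
    have "real (card S) * (pi/6) \<le> pi * (2*(2*((C+1)+1)*(1+(c*N+1)+norm (rv a'))/norm (rv a'))) * (c*N+1)^2"
      using count_main[where m="real_of_int m" and C="C+1", OF a'0 s _ cN0 True] Pc C by simp
    moreover note npos
    ultimately have "real (card S) \<le> 96*((C+1)+1)*c^2*(3*c^2+1) * N^3 / \<mu>"
      using arith_final[OF c N _ mu(1,2) inv, of "C+1" "real (card S)"] C by simp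
    thus ?thesis by (simp add: \<mu>_def)
  qed
qed

end
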